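(* Let $r\ge 2$ be an integer. Let $G$ be the three-layer acyclic directed graph with source nodes $S=\{s_1,\dots,s_r\}$, intermediate nodes $U=\{u_1,\dots,u_r\}$ and $\bar U=\{\bar u_1,\dots,\bar u_r\}$, and terminal nodes $D=\{d_1,\dots,d_r\}$, whose edges are: $(s_i,u_i)$ for each $i\in[r]$; $(s_j,\bar u_i)$ for each ordered pair $i\neq j$ in $[r]$; and $(u_i,d_i)$, $(\bar u_i,d_i)$ for each $i\in[r]$; every edge has capacity $1$. Let $\mathcal{B}=\{\beta_v: v\in U\cup\bar U\}$ where $\beta_v$ is the set of all edges entering $v$, and let $\mathcal{I}=(G,S,D,\mathcal{B})$. Then $\mathbf{R}_{\tt key}(\mathcal{I})=1$ (achieved, for $n=1$, by each source $s_i$ sending one bit $b_i$ on all its outgoing edges, each intermediate node forwarding the binary sum of its inputs, and $K=\sum_{i=1}^r b_i \bmod 2$), while $\mathbf{R}_{\tt key(2)}(\mathcal{I})\le \frac{1}{r-1}$.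
   Context: Network coding instance: $\mathcal{I}=(G,S,D,\mathcal{B})$ where $G=(V,E)$ is a finite acyclic directed graph, each edge $e$ has a capacity $c_e>0$, $S$ source nodes, $D$ terminal nodes, $\mathcal{B}$ a collection of subsets of $E$ (edge sets that may be eavesdropped). Each source $s_i$ holds an unlimited collection of mutually independent uniform bits $\{b_{ij}\}_j$, independent across sources. $[r]=\{1,\dots,r\}$. Network code of blocklength $n$: for each edge $e=(u,v)$ an encoding function producing $X^n_e\in\mathcal{X}^n_e$, $|\mathcal{X}^n_e|=\lfloor 2^{c_e n}\rfloor$, from $X^n_{\mathrm{In}(u)}$ (messages on edges entering $u$, plus $u$'s own bits if $u$ is a source); decoding functions at terminals of $X^n_{\mathrm{In}(d_j)}$. $(R,n)_{\tt key}$-feasibility: there is a blocklength-$n$ code and a random variable $K$ (function of source bits), uniform with $H(K)=Rn$, with $H(K\mid X^n_{\mathrm{In}(d_j)})=0$ for all $d_j\in D$ and $I(K;(X^n_e:e\in\beta))=0$ for all $\beta\in\mathcal{B}$. $(R,n)_{\tt key(2)}$-feasibility: there is a blocklength-$n$ code, $K$ uniform with $H(K)=Rn$, and a collection $M$ of source bits $b_{ij}$ such that $H(M\mid X^n_{\mathrm{In}(d_j)})=0$ for all $d_j\in D$, $H(K\mid M)=0$, and $I(K;(X^n_e:e\in\beta))=0$ for all $\beta\in\mathcal{B}$. $\mathbf{R}_{\tt key}(\mathcal{I})$ (resp. $\mathbf{R}_{\tt key(2)}(\mathcal{I})$) is the maximum $R$ such that for every $\Delta>0$ there are infinitely many $n$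 for which $\mathcal{I}$ is $(R-\Delta,n)_{\tt key}$-feasible (resp. $(R-\Delta,n)_{\tt key(2)}$-feasible). *)

theory Defs
  imports Complex_Main
begin

text \<open>An outcome assigns to node v and index j the bit b_vj. A code uses finitely many
  bits, m per source; the sample space consists of all assignments of the bits b_vj
  with v a source and j < m (all other entries are fixed to False), with the uniform
  distribution, i.e. the b_vj are i.i.d. uniform bits.\<close>

type_synonym 'v outcome = "'v \<Rightarrow> nat \<Rightarrow> bool"

definition sample_space :: "'v set \<Rightarrow> nat \<Rightarrow> 'v outcome set" where
  "sample_space S m = {\<omega>. \<forall>v j. (v \<notin> S \<or> m \<le> j) \<longrightarrow> \<omega> v j = False}"

definition prb :: "'a set \<Rightarrow> ('a \<Rightarrow> 'b) \<Rightarrow> 'b \<Rightarrow> real" where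
  "prb \<Omega> X y = real (card {\<omega>\<in>\<Omega>. X \<omega> = y}) / real (card \<Omega>)"

definition ent :: "'a set \<Rightarrow> ('a \<Rightarrow> 'b) \<Rightarrow> real" where
  "ent \<Omega> X = - (\<Sum>y\<in>X ` \<Omega>. prb \<Omega> X y * log 2 (prb \<Omega> X y))"

definition cond_ent :: "'a set \<Rightarrow> ('a \<Rightarrow> 'b) \<Rightarrow> ('a \<Rightarrow> 'c) \<Rightarrow> real" where
  "cond_ent \<Omega> X Y = ent \<Omega> (\<lambda>\<omega>. (X \<omega>, Y \<omega>)) - ent \<Omega> Y"

definition mutual_info :: "'a set \<Rightarrow> ('a \<Rightarrow> 'b) \<Rightarrow> ('a \<Rightarrow> 'c) \<Rightarrow> real" where
  "mutual_info \<Omega> X Y = ent \<Omega> X + ent \<Omega> Y - ent \<Omega> (\<lambda>\<omega>. (X \<omega>, Y \<omega>))"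

definition uniform_rv :: "'a set \<Rightarrow> ('a \<Rightarrow> 'b) \<Rightarrow> bool" where
  "uniform_rv \<Omega> X = (\<forall>y\<in>X ` \<Omega>. \<forall>y'\<in>X ` \<Omega>. prb \<Omega> X y = prb \<Omega> X y')"

definition In_edges :: "('v \<times> 'v) set \<Rightarrow> 'v \<Rightarrow> ('v \<times> 'v) set" where
  "In_edges E v = {e \<in> E. snd e = v}"

definition msgs :: "('v outcome \<Rightarrow> ('v \<times> 'v) \<Rightarrow> nat) \<Rightarrow> ('v \<times> 'v) set
    \<Rightarrow> 'v outcome \<Rightarrow> (('v \<times> 'v) \<Rightarrow> nat)" where
  "msgs X A = (\<lambda>\<omega> e. if e \<in> A then X \<omega> e else 0)"

text \<open>A blocklength-n network code using m bits per source, given by its edge messages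
  X \<omega> e: the message on e = (u,v) takes values in an alphabet of size
  floor(2^(c_e n)) (identified with {0..<floor(2^(c_e n))}) and is a function of the
  messages on the edges entering u together with u's own source bits.\<close>
definition is_code :: "('v \<times> 'v) set \<Rightarrow> (('v \<times> 'v) \<Rightarrow> real) \<Rightarrow> 'v set \<Rightarrow> nat \<Rightarrow> nat
    \<Rightarrow> ('v outcome \<Rightarrow> ('v \<times> 'v) \<Rightarrow> nat) \<Rightarrow> bool" where
  "is_code E c S n m X \<longleftrightarrow>
     (\<forall>\<omega>\<in>sample_space S m. \<forall>e\<in>E. X \<omega> e < nat \<lfloor>2 powr (c e * real n)\<rfloor>) \<and>
     (\<forall>e\<in>E. \<forall>\<omega>\<in>sample_space S m. \<forall>\<omega>'\<in>sample_space S m.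
        (\<forall>e'\<in>In_edges E (fst e). X \<omega> e' = X \<omega>' e') \<and> \<omega> (fst e) = \<omega>' (fst e)
          \<longrightarrow> X \<omega> e = X \<omega>' e)"

definition bits_rv :: "('v \<times> nat) set \<Rightarrow> 'v outcome \<Rightarrow> ('v \<times> nat \<Rightarrow> bool)" where
  "bits_rv M = (\<lambda>\<omega> p. if p \<in> M then \<omega> (fst p) (snd p) else False)"

definition key_feasible ::
  "('v \<times> 'v) set \<Rightarrow> (('v \<times> 'v) \<Rightarrow> real) \<Rightarrow> 'v set \<Rightarrow> 'v set \<Rightarrow> ('v \<times> 'v) set set
     \<Rightarrow> real \<Rightarrow> nat \<Rightarrow> bool" where
  "key_feasible E c S D B R n \<longleftrightarrow>
     (\<exists>m X (K :: 'v outcome \<Rightarrow> nat).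
        is_code E c S n m X \<and>
        uniform_rv (sample_space S m) K \<and>
        ent (sample_space S m) K \<ge> R * real n \<and>
        (\<forall>d\<in>D. cond_ent (sample_space S m) K (msgs X (In_edges E d)) = 0) \<and>
        (\<forall>\<beta>\<in>B. mutual_info (sample_space S m) K (msgs X \<beta>) = 0))"

definition key2_feasible ::
  "('v \<times> 'v) set \<Rightarrow> (('v \<times> 'v) \<Rightarrow> real) \<Rightarrow> 'v set \<Rightarrow> 'v set \<Rightarrow> ('v \<times> 'v) set set
     \<Rightarrow> real \<Rightarrow> nat \<Rightarrow> bool" where
  "key2_feasible E c S D B R n \<longleftrightarrow>
     (\<exists>m X (K :: 'v outcome \<Rightarrow> nat) M.
        is_code E c S n m X \<and>
        uniform_rv (sample_space S m) K \<and>
        ent (sample_space S m) K \<ge> R * real n \<and>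
        M \<subseteq> {(i, j). i \<in> S \<and> j < m} \<and>
        (\<forall>d\<in>D. cond_ent (sample_space S m) (bits_rv M) (msgs X (In_edges E d)) = 0) \<and>
        cond_ent (sample_space S m) K (bits_rv M) = 0 \<and>
        (\<forall>\<beta>\<in>B. mutual_info (sample_space S m) K (msgs X \<beta>) = 0))"

text \<open>R is an achievable key rate: for every \<Delta> > 0 there are infinitely many n with
  (R - \<Delta>, n)-feasibility. The key capacity R_key is the maximum of these R.\<close>
definition key_rate_achievable where
  "key_rate_achievable E c S D B R \<longleftrightarrow>
     (\<forall>\<Delta>>0. infinite {n. key_feasible E c S D B (R - \<Delta>) n})"

definition key2_rate_achievable where
  "key2_rate_achievable E c S D B R \<longleftrightarrow>
     (\<forall>\<Delta>>0. infinite {n. key2_feasible E c S D B (R - \<Delta>) n})"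

datatype node = Src nat | Unode nat | Ubar nat | Dst nat

definition ex_edges :: "nat \<Rightarrow> (node \<times> node) set" where
  "ex_edges r =
     {(Src i, Unode i) | i. i \<in> {1..r}} \<union>
     {(Src j, Ubar i) | i j. i \<in> {1..r} \<and> j \<in> {1..r} \<and> i \<noteq> j} \<union>
     {(Unode i, Dst i) | i. i \<in> {1..r}} \<union>
     {(Ubar i, Dst i) | i. i \<in> {1..r}}"

definition ex_cap :: "node \<times> node \<Rightarrow> real" where
  "ex_cap e = 1"

definition ex_sources :: "nat \<Rightarrow> node set" where
  "ex_sources r = Src ` {1..r}"

definition ex_terminals :: "nat \<Rightarrow> node set" where
  "ex_terminals r = Dst ` {1..r}"

definition ex_wiretap :: "nat \<Rightarrow> (node \<times> node) set set" where
  "ex_wiretap r = (\<lambda>v. In_edges (ex_edges r) v) ` (Unode ` {1..r} \<union> Ubar ` {1..r})"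

end

theory Submission
  imports Defs "HOL-Library.FuncSet"
begin



definition cnt :: "'a set \<Rightarrow> ('a \<Rightarrow> 'b) \<Rightarrow> 'b \<Rightarrow> nat" where
  "cnt \<Omega> X y = card {\<omega>\<in>\<Omega>. X \<omega> = y}"

lemma prb_cnt: "prb \<Omega> X y = real (cnt \<Omega> X y) / real (card \<Omega>)"
  by (simp add: prb_def cnt_def)

lemma sum_img:
  assumes "finite \<Omega>"
  shows "(\<Sum>y\<in>X ` \<Omega>. real (cnt \<Omega> X y) * h y) = (\<Sum>\<omega>\<in>\<Omega>. h (X \<omega>))"
proof -
  have "(\<Sum>\<omega>\<in>\<Omega>. h (X \<omega>)) = (\<Sum>y\<in>X ` \<Omega>. \<Sum>\<omega>\<in>{\<omega>\<in>\<Omega>. X \<omega> = y}. h (X \<omega>))"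
    using assms by (rule sum.image_gen)
  also have "\<dots> = (\<Sum>y\<in>X ` \<Omega>. real (cnt \<Omega> X y) * h y)"
    by (rule sum.cong) (auto simp: cnt_def)
  finally show ?thesis by simp
qed

lemma cnt_pos: "finite \<Omega> \<Longrightarrow> \<omega> \<in> \<Omega> \<Longrightarrow> cnt \<Omega> X (X \<omega>) > 0"
  unfolding cnt_def by (subst card_gt_0_iff) auto

lemma prb_pos: "finite \<Omega> \<Longrightarrow> \<omega> \<in> \<Omega> \<Longrightarrow> prb \<Omega> X (X \<omega>) > 0"
  unfolding prb_cnt using cnt_pos[of \<Omega> \<omega> X] card_gt_0_iff[of \<Omega>] by (auto intro!: divide_pos_pos)

lemma ent_alt:
  assumes "finite \<Omega>" "\<Omega> \<noteq> {}"
  shows "ent \<Omega> X = - (\<Sum>\<omega>\<in>\<Omega>. log 2 (prb \<Omega> X (X \<omega>))) / real (card \<Omega>)"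
proof -
  have T: "real (card \<Omega>) > 0" using assms by (simp add: card_gt_0_iff)
  have "(\<Sum>y\<in>X ` \<Omega>. prb \<Omega> X y * log 2 (prb \<Omega> X y))
      = (\<Sum>y\<in>X ` \<Omega>. real (cnt \<Omega> X y) * (log 2 (prb \<Omega> X y) / real (card \<Omega>)))"
    by (rule sum.cong) (auto simp: prb_cnt)
  also have "\<dots> = (\<Sum>\<omega>\<in>\<Omega>. log 2 (prb \<Omega> X (X \<omega>)) / real (card \<Omega>))"
    using sum_img[OF assms(1)] .
  also have "\<dots> = (\<Sum>\<omega>\<in>\<Omega>. log 2 (prb \<Omega> X (X \<omega>))) / real (card \<Omega>)"
    by (simp add: sum_divide_distrib)
  finally show ?thesis by (simp add: ent_def)
qed

lemma sum_prb: "finite \<Omega> \<Longrightarrow> \<Omega> \<noteq> {} \<Longrightarrow> (\<Sum>y\<in>X ` \<Omega>. prb \<Omega> X y) = 1"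
proof -
  assume a: "finite \<Omega>" "\<Omega> \<noteq> {}"
  have "(\<Sum>y\<in>X ` \<Omega>. prb \<Omega> X y) = (\<Sum>y\<in>X ` \<Omega>. real (cnt \<Omega> X y) * (1 / real (card \<Omega>)))"
    by (rule sum.cong) (auto simp: prb_cnt)
  also have "\<dots> = (\<Sum>\<omega>\<in>\<Omega>. 1 / real (card \<Omega>))" using sum_img[OF a(1)] .
  also have "\<dots> = 1" using a by (simp add: card_gt_0_iff)
  finally show ?thesis .
qed

lemma uniform_ent:
  assumes "finite \<Omega>" "\<Omega> \<noteq> {}" "uniform_rv \<Omega> X"
  shows "ent \<Omega> X = log 2 (real (card (X ` \<Omega>)))"
proof -
  obtain \<omega>0 where w0: "\<omega>0 \<in> \<Omega>" using assms(2) by blast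
  define p where "p = prb \<Omega> X (X \<omega>0)"
  define N where "N = real (card (X ` \<Omega>))"
  have eq: "\<And>y. y \<in> X ` \<Omega> \<Longrightarrow> prb \<Omega> X y = p"
    using assms(3) w0 unfolding uniform_rv_def p_def by blast
  have s1: "(\<Sum>y\<in>X ` \<Omega>. prb \<Omega> X y) = (\<Sum>y\<in>X ` \<Omega>. p)"
    by (rule sum.cong[OF refl eq])
  have Np: "N * p = 1" using sum_prb[OF assms(1,2), of X] s1 unfolding N_def by simp
  have s2: "(\<Sum>y\<in>X ` \<Omega>. prb \<Omega> X y * log 2 (prb \<Omega> X y)) = (\<Sum>y\<in>X ` \<Omega>. p * log 2 p)"
    by (rule sum.cong[OF refl]) (simp only: eq)
  have "ent \<Omega> X = - (N * (p * log 2 p))" unfolding ent_def s2 N_def by simp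
  also have "\<dots> = - ((N * p) * log 2 p)" by (simp only: mult.assoc)
  also have "\<dots> = - log 2 p" by (simp only: Np mult_1)
  also have "\<dots> = log 2 N"
  proof -
    have Npos: "N > 0" unfolding N_def using assms(1) w0 by (auto simp: card_gt_0_iff)
    hence "p = 1 / N" using Np by (simp add: field_simps)
    thus ?thesis using Npos by (simp add: log_divide)
  qed
  finally show ?thesis unfolding N_def .
qed

lemma cnt_sum: "finite \<Omega> \<Longrightarrow> (\<Sum>y\<in>X ` \<Omega>. real (cnt \<Omega> X y)) = real (card \<Omega>)"
  using sum_img[of \<Omega> X "\<lambda>_. 1"] by simp

lemma ce_alt:
  assumes "finite \<Omega>" "\<Omega> \<noteq> {}"
  shows "cond_ent \<Omega> X Y = (\<Sum>\<omega>\<in>\<Omega>. log 2 (prb \<Omega> Y (Y \<omega>)) - log 2 (prb \<Omega> (\<lambda>\<omega>. (X \<omega>, Y \<omega>)) (X \<omega>, Y \<omega>))) / real (card \<Omega>)"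
  unfolding cond_ent_def ent_alt[OF assms] by (simp add: sum_subtractf diff_divide_distrib)

lemma prb_pair_le: "finite \<Omega> \<Longrightarrow> prb \<Omega> (\<lambda>\<omega>. (X \<omega>, Y \<omega>)) (x, y) \<le> prb \<Omega> Y y"
  unfolding prb_def by (intro divide_right_mono) (auto intro!: card_mono)

lemma ce_zero_fun:
  assumes fin: "finite \<Omega>" and ce: "cond_ent \<Omega> X Y = 0" and w: "\<omega> \<in> \<Omega>" "\<omega>' \<in> \<Omega>" "Y \<omega> = Y \<omega>'"
  shows "X \<omega> = X \<omega>'"
proof -
  have ne: "\<Omega> \<noteq> {}" using w by auto
  define Z where "Z = (\<lambda>\<omega>. (X \<omega>, Y \<omega>))"
  define f where "f = (\<lambda>\<omega>. log 2 (prb \<Omega> Y (Y \<omega>)) - log 2 (prb \<Omega> Z (Z \<omega>)))"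
  have T: "real (card \<Omega>) > 0" using fin ne by (simp add: card_gt_0_iff)
  have nn: "\<forall>\<omega>\<in>\<Omega>. f \<omega> \<ge> 0"
  proof
    fix \<omega> assume "\<omega> \<in> \<Omega>"
    have "prb \<Omega> Z (Z \<omega>) > 0" using prb_pos[OF fin \<open>\<omega> \<in> \<Omega>\<close>] .
    moreover have "prb \<Omega> Z (Z \<omega>) \<le> prb \<Omega> Y (Y \<omega>)" unfolding Z_def using prb_pair_le[OF fin] .
    ultimately show "f \<omega> \<ge> 0" unfolding f_def by simp
  qed
  have "sum f \<Omega> / real (card \<Omega>) = 0" using ce ce_alt[OF fin ne, of X Y] unfolding f_def Z_def by simp
  hence "sum f \<Omega> = 0" using T by simp
  hence "f \<omega> = 0" using sum_nonneg_eq_0_iff[OF fin] nn w(1) by blast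
  hence "prb \<Omega> Z (Z \<omega>) = prb \<Omega> Y (Y \<omega>)"
    unfolding f_def using prb_pos[OF fin w(1), of Z] prb_pos[OF fin w(1), of Y]
    by (metis eq_iff_diff_eq_0 inj_onD log_inj one_less_numeral_iff semiring_norm(76) greaterThan_iff)
  hence "card {\<omega>'\<in>\<Omega>. Z \<omega>' = Z \<omega>} = card {\<omega>'\<in>\<Omega>. Y \<omega>' = Y \<omega>}"
    unfolding prb_def using T by (simp add: divide_cancel_right)
  hence "{\<omega>'\<in>\<Omega>. Z \<omega>' = Z \<omega>} = {\<omega>'\<in>\<Omega>. Y \<omega>' = Y \<omega>}"
    by (intro card_subset_eq) (auto simp: Z_def fin)
  hence "\<omega>' \<in> {\<omega>'\<in>\<Omega>. Z \<omega>' = Z \<omega>}" using w by auto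
  thus ?thesis by (simp add: Z_def)
qed

lemma fun_ce_zero:
  assumes fin: "finite \<Omega>" and H: "\<And>\<omega> \<omega>'. \<omega> \<in> \<Omega> \<Longrightarrow> \<omega>' \<in> \<Omega> \<Longrightarrow> Y \<omega> = Y \<omega>' \<Longrightarrow> X \<omega> = X \<omega>'"
  shows "cond_ent \<Omega> X Y = 0"
proof (cases "\<Omega> = {}")
  case True thus ?thesis by (simp add: cond_ent_def ent_def)
next
  case False
  have pe: "prb \<Omega> (\<lambda>\<omega>. (X \<omega>, Y \<omega>)) (X \<omega>, Y \<omega>) = prb \<Omega> Y (Y \<omega>)" if w: "\<omega> \<in> \<Omega>" for \<omega>
  proof -
    have "{\<omega>'\<in>\<Omega>. (X \<omega>', Y \<omega>') = (X \<omega>, Y \<omega>)} = {\<omega>'\<in>\<Omega>. Y \<omega>' = Y \<omega>}"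
    proof (rule Collect_cong)
      fix \<omega>' show "(\<omega>' \<in> \<Omega> \<and> (X \<omega>', Y \<omega>') = (X \<omega>, Y \<omega>)) = (\<omega>' \<in> \<Omega> \<and> Y \<omega>' = Y \<omega>)"
        using H[of \<omega>' \<omega>] w by blast
    qed
    thus ?thesis unfolding prb_def by simp
  qed
  have "(\<Sum>\<omega>\<in>\<Omega>. log 2 (prb \<Omega> Y (Y \<omega>)) - log 2 (prb \<Omega> (\<lambda>\<omega>. (X \<omega>, Y \<omega>)) (X \<omega>, Y \<omega>))) = (\<Sum>\<omega>\<in>\<Omega>. 0)"
    by (rule sum.cong[OF refl]) (simp only: pe diff_self)
  thus ?thesis using ce_alt[OF fin False, of X Y] by simp
qed

lemma mi_alt:
  assumes "finite \<Omega>" "\<Omega> \<noteq> {}"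
  shows "mutual_info \<Omega> X Y = (\<Sum>\<omega>\<in>\<Omega>. log 2 (prb \<Omega> (\<lambda>\<omega>. (X \<omega>, Y \<omega>)) (X \<omega>, Y \<omega>)) - log 2 (prb \<Omega> X (X \<omega>)) - log 2 (prb \<Omega> Y (Y \<omega>))) / real (card \<Omega>)"
  unfolding mutual_info_def ent_alt[OF assms] by (simp add: sum_subtractf diff_divide_distrib)

lemma indep_mi:
  assumes fin: "finite \<Omega>" and H: "\<And>\<omega>. \<omega> \<in> \<Omega> \<Longrightarrow> prb \<Omega> (\<lambda>\<omega>. (X \<omega>, Y \<omega>)) (X \<omega>, Y \<omega>) = prb \<Omega> X (X \<omega>) * prb \<Omega> Y (Y \<omega>)"
  shows "mutual_info \<Omega> X Y = 0"
proof (cases "\<Omega> = {}")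
  case True thus ?thesis by (simp add: mutual_info_def ent_def)
next
  case False
  have "log 2 (prb \<Omega> (\<lambda>\<omega>. (X \<omega>, Y \<omega>)) (X \<omega>, Y \<omega>)) - log 2 (prb \<Omega> X (X \<omega>)) - log 2 (prb \<Omega> Y (Y \<omega>)) = 0" if w: "\<omega> \<in> \<Omega>" for \<omega>
  proof -
    have a: "prb \<Omega> X (X \<omega>) > 0" "prb \<Omega> Y (Y \<omega>) > 0" using prb_pos[OF fin w] by auto
    show ?thesis using H[OF w] a by (simp add: log_mult)
  qed
  thus ?thesis using mi_alt[OF fin False, of X Y] by simp
qed

lemma mi_zero_prod:
  assumes fin: "finite \<Omega>" and mi: "mutual_info \<Omega> X Y = 0" and w: "\<omega>0 \<in> \<Omega>" "\<omega>1 \<in> \<Omega>"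
  shows "\<exists>\<omega>\<in>\<Omega>. X \<omega> = X \<omega>0 \<and> Y \<omega> = Y \<omega>1"
proof (rule ccontr)
  assume nex: "\<not> ?thesis"
  have ne: "\<Omega> \<noteq> {}" using w by auto
  have T: "real (card \<Omega>) > 0" using fin ne by (simp add: card_gt_0_iff)
  define Z where "Z = (\<lambda>\<omega>. (X \<omega>, Y \<omega>))"
  define g where "g = (\<lambda>z. prb \<Omega> X (fst z) * prb \<Omega> Y (snd z))"
  define q where "q = (\<lambda>\<omega>. g (Z \<omega>) / prb \<Omega> Z (Z \<omega>))"
  have lq: "log 2 (q \<omega>) = - (log 2 (prb \<Omega> Z (Z \<omega>)) - log 2 (prb \<Omega> X (X \<omega>)) - log 2 (prb \<Omega> Y (Y \<omega>)))"
    if "\<omega> \<in> \<Omega>" for \<omega>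
  proof -
    have a: "prb \<Omega> X (X \<omega>) > 0" "prb \<Omega> Y (Y \<omega>) > 0" "prb \<Omega> Z (Z \<omega>) > 0"
      using prb_pos[OF fin that] by auto
    show ?thesis unfolding q_def g_def using a by (simp add: log_mult log_divide Z_def)
  qed
  have "(\<Sum>\<omega>\<in>\<Omega>. log 2 (prb \<Omega> Z (Z \<omega>)) - log 2 (prb \<Omega> X (X \<omega>)) - log 2 (prb \<Omega> Y (Y \<omega>))) = 0"
    using mi mi_alt[OF fin ne, of X Y] T unfolding Z_def by simp
  moreover have "(\<Sum>\<omega>\<in>\<Omega>. log 2 (q \<omega>)) = (\<Sum>\<omega>\<in>\<Omega>. - (log 2 (prb \<Omega> Z (Z \<omega>)) - log 2 (prb \<Omega> X (X \<omega>)) - log 2 (prb \<Omega> Y (Y \<omega>))))"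
    using lq by (rule sum.cong[OF refl])
  ultimately have s0: "(\<Sum>\<omega>\<in>\<Omega>. log 2 (q \<omega>)) = 0"
    by (simp only: sum_negf)
  have qpos: "q \<omega> > 0" if "\<omega> \<in> \<Omega>" for \<omega>
    unfolding q_def g_def using prb_pos[OF fin that, of X] prb_pos[OF fin that, of Y] prb_pos[OF fin that, of Z]
    by (auto intro!: divide_pos_pos mult_pos_pos simp: Z_def)
  have "log 2 (q \<omega>) \<le> (q \<omega> - 1) / ln 2" if "\<omega> \<in> \<Omega>" for \<omega>
    unfolding log_def using ln_le_minus_one[OF qpos[OF that]] by (simp add: divide_right_mono)
  hence "0 \<le> (\<Sum>\<omega>\<in>\<Omega>. (q \<omega> - 1) / ln 2)" using s0 sum_mono by (metis (no_types, lifting))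
  hence "0 \<le> (\<Sum>\<omega>\<in>\<Omega>. q \<omega> - 1) / ln 2" by (simp add: sum_divide_distrib)
  hence "0 \<le> (\<Sum>\<omega>\<in>\<Omega>. q \<omega> - 1)" by (simp add: zero_le_divide_iff)
  hence sq: "real (card \<Omega>) \<le> (\<Sum>\<omega>\<in>\<Omega>. q \<omega>)" by (simp add: sum_subtractf)
  have "(\<Sum>\<omega>\<in>\<Omega>. q \<omega>) = (\<Sum>z\<in>Z ` \<Omega>. real (cnt \<Omega> Z z) * (g z / prb \<Omega> Z z))"
    unfolding q_def using sum_img[OF fin, of Z "\<lambda>z. g z / prb \<Omega> Z z"] by simp
  also have "\<dots> = (\<Sum>z\<in>Z ` \<Omega>. real (card \<Omega>) * g z)"
  proof (rule sum.cong)
    fix z assume "z \<in> Z ` \<Omega>"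
    then obtain \<omega> where "\<omega> \<in> \<Omega>" "z = Z \<omega>" by auto
    hence "cnt \<Omega> Z z > 0" using cnt_pos[OF fin] by auto
    thus "real (cnt \<Omega> Z z) * (g z / prb \<Omega> Z z) = real (card \<Omega>) * g z"
      using T by (simp add: prb_cnt field_simps)
  qed simp
  also have "\<dots> = real (card \<Omega>) * (\<Sum>z\<in>Z ` \<Omega>. g z)" by (simp add: sum_distrib_left)
  finally have "1 \<le> (\<Sum>z\<in>Z ` \<Omega>. g z)" using sq T by (simp add: mult_le_cancel_left1)
  moreover
  define P where "P = X ` \<Omega> \<times> Y ` \<Omega>"
  have finP: "finite P" unfolding P_def using fin by simp
  have "(\<Sum>z\<in>P. g z) = (\<Sum>x\<in>X ` \<Omega>. prb \<Omega> X x) * (\<Sum>y\<in>Y ` \<Omega>. prb \<Omega> Y y)"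
    unfolding P_def g_def by (simp add: sum_product sum.cartesian_product case_prod_beta)
  hence sP: "(\<Sum>z\<in>P. g z) = 1" using sum_prb[OF fin ne, of X] sum_prb[OF fin ne, of Y] by simp
  define z0 where "z0 = (X \<omega>0, Y \<omega>1)"
  have z0P: "z0 \<in> P" unfolding z0_def P_def using w by auto
  have z0n: "z0 \<notin> Z ` \<Omega>" using nex unfolding z0_def Z_def by auto
  have gnn: "\<And>z. g z \<ge> 0" unfolding g_def prb_def by simp
  have g0: "g z0 > 0" unfolding g_def z0_def using prb_pos[OF fin w(1), of X] prb_pos[OF fin w(2), of Y] by simp
  have sub: "Z ` \<Omega> \<subseteq> P - {z0}" using z0n unfolding P_def Z_def by auto
  have "(\<Sum>z\<in>P. g z) = g z0 + (\<Sum>z\<in>P - {z0}. g z)" using sum.remove[OF finP z0P] .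
  moreover have "(\<Sum>z\<in>Z ` \<Omega>. g z) \<le> (\<Sum>z\<in>P - {z0}. g z)"
    using sum_mono2[OF _ sub] finP gnn by auto
  ultimately show False using sP g0 by linarith
qed

lemma card_partition:
  assumes fin: "finite \<Omega>" and A: "A \<subseteq> \<Omega>"
  shows "card A = (\<Sum>y\<in>Y ` \<Omega>. card {\<omega>\<in>A. Y \<omega> = y})"
proof -
  have finA: "finite A" using fin A finite_subset by blast
  have "card A = (\<Sum>\<omega>\<in>A. (1::nat))" by simp
  also have "\<dots> = (\<Sum>y\<in>Y ` A. \<Sum>\<omega>\<in>{\<omega>\<in>A. Y \<omega> = y}. 1)" using finA by (rule sum.image_gen)
  also have "\<dots> = (\<Sum>y\<in>Y ` A. card {\<omega>\<in>A. Y \<omega> = y})" by simp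
  also have "\<dots> = (\<Sum>y\<in>Y ` \<Omega>. card {\<omega>\<in>A. Y \<omega> = y})"
  proof (rule sum.mono_neutral_left)
    show "finite (Y ` \<Omega>)" using fin by simp
    show "Y ` A \<subseteq> Y ` \<Omega>" using A by blast
    show "\<forall>i\<in>Y ` \<Omega> - Y ` A. card {\<omega> \<in> A. Y \<omega> = i} = 0"
    proof
      fix i assume "i \<in> Y ` \<Omega> - Y ` A"
      hence "{\<omega> \<in> A. Y \<omega> = i} = {}" by blast
      thus "card {\<omega> \<in> A. Y \<omega> = i} = 0" by (metis card.empty)
    qed
  qed
  finally show ?thesis .
qed

lemma transl_indep:
  assumes fin: "finite \<Omega>"
    and H: "\<And>\<omega>0 \<omega>1. \<omega>0 \<in> \<Omega> \<Longrightarrow> \<omega>1 \<in> \<Omega> \<Longrightarrow> \<exists>\<tau>. inj_on \<tau> \<Omega> \<and> \<tau> ` \<Omega> \<subseteq> \<Omega> \<and> (\<forall>\<omega>\<in>\<Omega>. Y (\<tau> \<omega>) = Y \<omega>)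
          \<and> (\<forall>\<omega>\<in>\<Omega>. X \<omega> = X \<omega>0 \<longrightarrow> X (\<tau> \<omega>) = X \<omega>1)"
  shows "\<forall>\<omega>\<in>\<Omega>. prb \<Omega> (\<lambda>\<omega>. (X \<omega>, Y \<omega>)) (X \<omega>, Y \<omega>) = prb \<Omega> X (X \<omega>) * prb \<Omega> Y (Y \<omega>)"
    and "uniform_rv \<Omega> X"
proof -
  define c where "c = (\<lambda>x y. card {\<omega>\<in>\<Omega>. X \<omega> = x \<and> Y \<omega> = y})"
  have cle: "c (X \<omega>0) y \<le> c (X \<omega>1) y" if w: "\<omega>0 \<in> \<Omega>" "\<omega>1 \<in> \<Omega>" for \<omega>0 \<omega>1 y
  proof -
    obtain \<tau> where t: "inj_on \<tau> \<Omega>" "\<tau> ` \<Omega> \<subseteq> \<Omega>" "\<forall>\<omega>\<in>\<Omega>. Y (\<tau> \<omega>) = Y \<omega>"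
        "\<forall>\<omega>\<in>\<Omega>. X \<omega> = X \<omega>0 \<longrightarrow> X (\<tau> \<omega>) = X \<omega>1"
      using H[OF w] by blast
    show ?thesis unfolding c_def
    proof (rule card_inj_on_le)
      show "inj_on \<tau> {\<omega> \<in> \<Omega>. X \<omega> = X \<omega>0 \<and> Y \<omega> = y}" using t(1) by (rule inj_on_subset) auto
      show "\<tau> ` {\<omega> \<in> \<Omega>. X \<omega> = X \<omega>0 \<and> Y \<omega> = y} \<subseteq> {\<omega> \<in> \<Omega>. X \<omega> = X \<omega>1 \<and> Y \<omega> = y}"
        using t(2,3,4) by auto
      show "finite {\<omega> \<in> \<Omega>. X \<omega> = X \<omega>1 \<and> Y \<omega> = y}" using fin by simp
    qed
  qed
  have ceq: "c (X \<omega>0) y = c (X \<omega>1) y" if "\<omega>0 \<in> \<Omega>" "\<omega>1 \<in> \<Omega>" for \<omega>0 \<omega>1 y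
    using cle[OF that, of y] cle[OF that(2,1), of y] by simp
  have cX: "cnt \<Omega> X x = (\<Sum>y\<in>Y ` \<Omega>. c x y)" for x
  proof -
    have "cnt \<Omega> X x = (\<Sum>y\<in>Y ` \<Omega>. card {\<omega>\<in>{\<omega>\<in>\<Omega>. X \<omega> = x}. Y \<omega> = y})"
      unfolding cnt_def by (rule card_partition[OF fin]) auto
    also have "\<dots> = (\<Sum>y\<in>Y ` \<Omega>. c x y)" unfolding c_def
      by (rule sum.cong[OF refl], rule arg_cong[where f=card]) blast
    finally show ?thesis .
  qed
  have cXeq: "cnt \<Omega> X (X \<omega>0) = cnt \<Omega> X (X \<omega>1)" if "\<omega>0 \<in> \<Omega>" "\<omega>1 \<in> \<Omega>" for \<omega>0 \<omega>1
    unfolding cX using ceq[OF that] by simp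
  show "uniform_rv \<Omega> X" unfolding uniform_rv_def
  proof (intro ballI)
    fix y y' assume "y \<in> X ` \<Omega>" "y' \<in> X ` \<Omega>"
    then obtain \<omega>0 \<omega>1 where "\<omega>0 \<in> \<Omega>" "\<omega>1 \<in> \<Omega>" "y = X \<omega>0" "y' = X \<omega>1" by blast
    thus "prb \<Omega> X y = prb \<Omega> X y'" unfolding prb_cnt using cXeq[of \<omega>0 \<omega>1] by simp
  qed
  show "\<forall>\<omega>\<in>\<Omega>. prb \<Omega> (\<lambda>\<omega>. (X \<omega>, Y \<omega>)) (X \<omega>, Y \<omega>) = prb \<Omega> X (X \<omega>) * prb \<Omega> Y (Y \<omega>)"
  proof
    fix \<omega> assume w: "\<omega> \<in> \<Omega>"
    define N where "N = card (X ` \<Omega>)"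
    have cY: "cnt \<Omega> Y y = (\<Sum>x\<in>X ` \<Omega>. c x y)" for y
    proof -
      have "cnt \<Omega> Y y = (\<Sum>x\<in>X ` \<Omega>. card {\<omega>\<in>{\<omega>\<in>\<Omega>. Y \<omega> = y}. X \<omega> = x})"
        unfolding cnt_def by (rule card_partition[OF fin]) auto
      also have "\<dots> = (\<Sum>x\<in>X ` \<Omega>. c x y)" unfolding c_def
        by (rule sum.cong[OF refl], rule arg_cong[where f=card]) blast
      finally show ?thesis .
    qed
    have cY2: "(\<Sum>x\<in>X ` \<Omega>. c x y) = N * c (X \<omega>) y" for y
    proof -
      have "(\<Sum>x\<in>X ` \<Omega>. c x y) = (\<Sum>x\<in>X ` \<Omega>. c (X \<omega>) y)"
      proof (rule sum.cong[OF refl])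
        fix x assume "x \<in> X ` \<Omega>"
        then obtain \<omega>' where "\<omega>' \<in> \<Omega>" "x = X \<omega>'" by blast
        thus "c x y = c (X \<omega>) y" using ceq[of \<omega>' \<omega> y] w by simp
      qed
      thus ?thesis by (simp add: N_def)
    qed
    have cY': "cnt \<Omega> Y y = N * c (X \<omega>) y" for y using cY cY2 by simp
    have "card \<Omega> = (\<Sum>x\<in>X ` \<Omega>. card {\<omega>\<in>\<Omega>. X \<omega> = x})" by (rule card_partition[OF fin]) auto
    also have "\<dots> = (\<Sum>x\<in>X ` \<Omega>. cnt \<Omega> X (X \<omega>))"
    proof (rule sum.cong[OF refl])
      fix x assume "x \<in> X ` \<Omega>"
      then obtain \<omega>' where "\<omega>' \<in> \<Omega>" "x = X \<omega>'" by blast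
      thus "card {\<omega> \<in> \<Omega>. X \<omega> = x} = cnt \<Omega> X (X \<omega>)" using cXeq[of \<omega>' \<omega>] w unfolding cnt_def by simp
    qed
    finally have TN: "card \<Omega> = N * cnt \<Omega> X (X \<omega>)" by (simp add: N_def)
    have cZ: "cnt \<Omega> (\<lambda>\<omega>. (X \<omega>, Y \<omega>)) (X \<omega>, Y \<omega>) = c (X \<omega>) (Y \<omega>)"
      unfolding cnt_def c_def by simp
    have Tp: "card \<Omega> > 0" using fin w by (auto simp: card_gt_0_iff)
    have key: "card \<Omega> * c (X \<omega>) (Y \<omega>) = cnt \<Omega> X (X \<omega>) * cnt \<Omega> Y (Y \<omega>)"
      using TN cY'[of "Y \<omega>"] by simp
    have key': "real (card \<Omega>) * real (c (X \<omega>) (Y \<omega>)) = real (cnt \<Omega> X (X \<omega>)) * real (cnt \<Omega> Y (Y \<omega>))"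
    proof -
      have "real (card \<Omega> * c (X \<omega>) (Y \<omega>)) = real (cnt \<Omega> X (X \<omega>) * cnt \<Omega> Y (Y \<omega>))"
        using key by (rule arg_cong)
      thus ?thesis by simp
    qed
    show "prb \<Omega> (\<lambda>\<omega>. (X \<omega>, Y \<omega>)) (X \<omega>, Y \<omega>) = prb \<Omega> X (X \<omega>) * prb \<Omega> Y (Y \<omega>)"
    proof -
      have "real (c (X \<omega>) (Y \<omega>)) / real (card \<Omega>) = (real (cnt \<Omega> X (X \<omega>)) * real (cnt \<Omega> Y (Y \<omega>))) / (real (card \<Omega>) * real (card \<Omega>))"
        using Tp key' by (simp add: divide_simps) (simp add: mult.commute)
      thus ?thesis unfolding prb_cnt cZ by simp
    qed
  qed
qed




lemma ss_fin: assumes "finite S" shows "finite (sample_space S m)"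
proof -
  have "sample_space S m \<subseteq> (\<lambda>A v k. (v, k) \<in> A) ` Pow (S \<times> {..<m})"
  proof
    fix \<omega> assume w: "\<omega> \<in> sample_space S m"
    have "\<omega> = (\<lambda>v k. (v, k) \<in> {(v, k). \<omega> v k})" by auto
    moreover have "{(v, k). \<omega> v k} \<in> Pow (S \<times> {..<m})"
      using w unfolding sample_space_def by (auto, (metis not_le)+)
    ultimately show "\<omega> \<in> (\<lambda>A v k. (v, k) \<in> A) ` Pow (S \<times> {..<m})" by blast
  qed
  moreover have "finite ((\<lambda>A v k. (v, k) \<in> A) ` Pow (S \<times> {..<m}))" using assms by simp
  ultimately show ?thesis by (rule finite_subset)
qed

lemma ss_false: "(\<lambda>_ _. False) \<in> sample_space S m"
  by (simp add: sample_space_def)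

lemma ss_out: "\<omega> \<in> sample_space S m \<Longrightarrow> v \<notin> S \<Longrightarrow> \<omega> v k = False"
  "\<omega> \<in> sample_space S m \<Longrightarrow> m \<le> k \<Longrightarrow> \<omega> v k = False"
  by (auto simp: sample_space_def)

lemma msgs_eq: "msgs X A \<omega> = msgs X A \<omega>' \<longleftrightarrow> (\<forall>e\<in>A. X \<omega> e = X \<omega>' e)"
  unfolding msgs_def fun_eq_iff by (metis)

lemma In_Src: "In_edges (ex_edges r) (Src j) = {}"
  by (auto simp: In_edges_def ex_edges_def)

lemma In_Unode: "i \<in> {1..r} \<Longrightarrow> In_edges (ex_edges r) (Unode i) = {(Src i, Unode i)}"
  by (auto simp: In_edges_def ex_edges_def)

lemma In_Ubar: "i \<in> {1..r} \<Longrightarrow> In_edges (ex_edges r) (Ubar i) = (\<lambda>j. (Src j, Ubar i)) ` ({1..r} - {i})"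
  by (auto simp: In_edges_def ex_edges_def)

lemma In_Dst: "i \<in> {1..r} \<Longrightarrow> In_edges (ex_edges r) (Dst i) = {(Unode i, Dst i), (Ubar i, Dst i)}"
  by (auto simp: In_edges_def ex_edges_def)

lemma cap_bound: "nat \<lfloor>2 powr (ex_cap e * real n)\<rfloor> = 2 ^ n"
proof -
  have "(2::real) powr (real n) = 2 ^ n" by (simp add: powr_realpow)
  hence "\<lfloor>(2::real) powr (ex_cap e * real n)\<rfloor> = 2 ^ n" by (simp add: ex_cap_def)
  thus ?thesis by simp
qed

lemma fin_sources: "finite (ex_sources r)" by (simp add: ex_sources_def)

lemma Src_in: "Src i \<in> ex_sources r \<longleftrightarrow> i \<in> {1..r}" by (auto simp: ex_sources_def)
lemma nonSrc: "Unode i \<notin> ex_sources r" "Ubar i \<notin> ex_sources r" "Dst i \<notin> ex_sources r"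
  by (auto simp: ex_sources_def)




lemma code_loc:
  assumes "is_code E c S n m X" "e \<in> E" "\<omega> \<in> sample_space S m" "\<omega>' \<in> sample_space S m"
    "\<forall>e'\<in>In_edges E (fst e). X \<omega> e' = X \<omega>' e'" "\<omega> (fst e) = \<omega>' (fst e)"
  shows "X \<omega> e = X \<omega>' e"
  using assms unfolding is_code_def by blast

lemma code_bound:
  assumes "is_code (ex_edges r) ex_cap S n m X" "e \<in> ex_edges r" "\<omega> \<in> sample_space S m"
  shows "X \<omega> e < 2 ^ n"
  using assms cap_bound unfolding is_code_def by metis

lemma E_mem: "i \<in> {1..r} \<Longrightarrow> (Src i, Unode i) \<in> ex_edges r"
  "i \<in> {1..r} \<Longrightarrow> (Unode i, Dst i) \<in> ex_edges r"
  "i \<in> {1..r} \<Longrightarrow> (Ubar i, Dst i) \<in> ex_edges r"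
  "i \<in> {1..r} \<Longrightarrow> j \<in> {1..r} \<Longrightarrow> i \<noteq> j \<Longrightarrow> (Src j, Ubar i) \<in> ex_edges r"
  by (auto simp: ex_edges_def)

lemma L_src:
  assumes "is_code (ex_edges r) c (ex_sources r) n m X" "(Src j, w) \<in> ex_edges r"
    "\<omega> \<in> sample_space (ex_sources r) m" "\<omega>' \<in> sample_space (ex_sources r) m" "\<omega> (Src j) = \<omega>' (Src j)"
  shows "X \<omega> (Src j, w) = X \<omega>' (Src j, w)"
  using code_loc[OF assms(1,2,3,4)] assms(5) by (simp add: In_Src)

lemma L_unode:
  assumes "is_code (ex_edges r) c (ex_sources r) n m X" "i \<in> {1..r}"
    "\<omega> \<in> sample_space (ex_sources r) m" "\<omega>' \<in> sample_space (ex_sources r) m"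
    "X \<omega> (Src i, Unode i) = X \<omega>' (Src i, Unode i)"
  shows "X \<omega> (Unode i, Dst i) = X \<omega>' (Unode i, Dst i)"
proof (rule code_loc[OF assms(1) E_mem(2)[OF assms(2)] assms(3,4)])
  show "\<forall>e'\<in>In_edges (ex_edges r) (fst (Unode i, Dst i)). X \<omega> e' = X \<omega>' e'"
    using assms(5) by (simp add: In_Unode[OF assms(2)])
  show "\<omega> (fst (Unode i, Dst i)) = \<omega>' (fst (Unode i, Dst i))"
    using ss_out(1)[OF assms(3) nonSrc(1)] ss_out(1)[OF assms(4) nonSrc(1)] by auto
qed

lemma L_ubar:
  assumes "is_code (ex_edges r) c (ex_sources r) n m X" "i \<in> {1..r}"
    "\<omega> \<in> sample_space (ex_sources r) m" "\<omega>' \<in> sample_space (ex_sources r) m"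
    "\<forall>j\<in>{1..r} - {i}. X \<omega> (Src j, Ubar i) = X \<omega>' (Src j, Ubar i)"
  shows "X \<omega> (Ubar i, Dst i) = X \<omega>' (Ubar i, Dst i)"
proof (rule code_loc[OF assms(1) E_mem(3)[OF assms(2)] assms(3,4)])
  show "\<forall>e'\<in>In_edges (ex_edges r) (fst (Ubar i, Dst i)). X \<omega> e' = X \<omega>' e'"
    using assms(5) by (simp add: In_Ubar[OF assms(2)])
  show "\<omega> (fst (Ubar i, Dst i)) = \<omega>' (fst (Ubar i, Dst i))"
    using ss_out(1)[OF assms(3) nonSrc(2)] ss_out(1)[OF assms(4) nonSrc(2)] by auto
qed

lemma claimA:
  assumes code: "is_code (ex_edges r) c (ex_sources r) n m X" and i: "i \<in> {1..r}"
    and ce: "cond_ent (sample_space (ex_sources r) m) (bits_rv M) (msgs X (In_edges (ex_edges r) (Dst i))) = 0"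
    and w: "\<omega> \<in> sample_space (ex_sources r) m" "\<omega>' \<in> sample_space (ex_sources r) m"
    and C: "X \<omega> (Ubar i, Dst i) = X \<omega>' (Ubar i, Dst i)"
    and vt: "(v, t) \<in> M" "v \<noteq> Src i"
  shows "\<omega> v t = \<omega>' v t"
proof -
  let ?\<Omega> = "sample_space (ex_sources r) m"
  define \<omega>2 where "\<omega>2 = (\<lambda>v. if v = Src i then \<omega> v else \<omega>' v)"
  have w2: "\<omega>2 \<in> ?\<Omega>" using w unfolding \<omega>2_def sample_space_def by auto
  have "X \<omega>2 (Src i, Unode i) = X \<omega> (Src i, Unode i)"
    by (rule L_src[OF code E_mem(1)[OF i] w2 w(1)]) (simp add: \<omega>2_def)
  hence a: "X \<omega>2 (Unode i, Dst i) = X \<omega> (Unode i, Dst i)" by (rule L_unode[OF code i w2 w(1)])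
  have "\<forall>j\<in>{1..r} - {i}. X \<omega>2 (Src j, Ubar i) = X \<omega>' (Src j, Ubar i)"
  proof
    fix j assume j: "j \<in> {1..r} - {i}"
    show "X \<omega>2 (Src j, Ubar i) = X \<omega>' (Src j, Ubar i)"
      by (rule L_src[OF code E_mem(4)[OF i] w2 w(2)]) (use j in \<open>auto simp: \<omega>2_def\<close>)
  qed
  hence b: "X \<omega>2 (Ubar i, Dst i) = X \<omega> (Ubar i, Dst i)" using L_ubar[OF code i w2 w(2)] C by simp
  have "msgs X (In_edges (ex_edges r) (Dst i)) \<omega>2 = msgs X (In_edges (ex_edges r) (Dst i)) \<omega>"
    unfolding msgs_eq In_Dst[OF i] using a b by simp
  hence "bits_rv M \<omega>2 = bits_rv M \<omega>"
    using ce_zero_fun[OF ss_fin[OF fin_sources] ce w2 w(1)] by simp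
  hence "bits_rv M \<omega>2 (v, t) = bits_rv M \<omega> (v, t)" by simp
  thus ?thesis using vt unfolding bits_rv_def \<omega>2_def by simp
qed

lemma claimB:
  assumes code: "is_code (ex_edges r) c (ex_sources r) n m X" and j: "j \<in> {1..r}"
    and ce: "cond_ent (sample_space (ex_sources r) m) (bits_rv M) (msgs X (In_edges (ex_edges r) (Dst j))) = 0"
    and ceK: "cond_ent (sample_space (ex_sources r) m) K (bits_rv M) = 0"
    and w: "\<omega> \<in> sample_space (ex_sources r) m" "\<omega>' \<in> sample_space (ex_sources r) m"
    and P: "msgs X (In_edges (ex_edges r) (Ubar j)) \<omega> = msgs X (In_edges (ex_edges r) (Ubar j)) \<omega>'"
    and bits: "\<forall>t. (Src j, t) \<in> M \<longrightarrow> \<omega> (Src j) t = \<omega>' (Src j) t"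
  shows "K \<omega> = K \<omega>'"
proof -
  have "\<forall>j'\<in>{1..r} - {j}. X \<omega> (Src j', Ubar j) = X \<omega>' (Src j', Ubar j)"
    using P unfolding msgs_eq In_Ubar[OF j] by auto
  hence C: "X \<omega> (Ubar j, Dst j) = X \<omega>' (Ubar j, Dst j)" by (rule L_ubar[OF code j w])
  have "bits_rv M \<omega> = bits_rv M \<omega>'"
  proof
    fix p show "bits_rv M \<omega> p = bits_rv M \<omega>' p"
    proof (cases p)
      case (Pair v t)
      show ?thesis
      proof (cases "p \<in> M")
        case True
        show ?thesis
        proof (cases "v = Src j")
          case True thus ?thesis using bits \<open>p \<in> M\<close> Pair by (simp add: bits_rv_def)
        next
          case False thus ?thesis using claimA[OF code j ce w C, of v t] \<open>p \<in> M\<close> Pair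
            by (simp add: bits_rv_def)
        qed
      qed (simp add: bits_rv_def)
    qed
  qed
  thus ?thesis using ce_zero_fun[OF ss_fin[OF fin_sources] ceK w] by simp
qed

lemma count2:
  assumes r: "r \<ge> 2" and code: "is_code (ex_edges r) ex_cap (ex_sources r) n m X"
    and ce: "\<forall>d\<in>ex_terminals r. cond_ent (sample_space (ex_sources r) m) (bits_rv M) (msgs X (In_edges (ex_edges r) d)) = 0"
    and ceK: "cond_ent (sample_space (ex_sources r) m) K (bits_rv M) = 0"
    and mi: "\<forall>\<beta>\<in>ex_wiretap r. mutual_info (sample_space (ex_sources r) m) K (msgs X \<beta>) = 0"
  shows "card (K ` sample_space (ex_sources r) m) ^ (r - 1) \<le> 2 ^ n"
proof -
  let ?\<Omega> = "sample_space (ex_sources r) m"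
  have fin: "finite ?\<Omega>" by (rule ss_fin[OF fin_sources])
  define \<omega>0 :: "node outcome" where "\<omega>0 = (\<lambda>_ _. False)"
  have w0: "\<omega>0 \<in> ?\<Omega>" unfolding \<omega>0_def by (rule ss_false)
  define P where "P = (\<lambda>j. msgs X (In_edges (ex_edges r) (Ubar j)))"
  define \<phi> where "\<phi> = (\<lambda>j k. SOME \<omega>. \<omega> \<in> ?\<Omega> \<and> K \<omega> = k \<and> P j \<omega> = P j \<omega>0)"
  have phi: "\<phi> j k \<in> ?\<Omega> \<and> K (\<phi> j k) = k \<and> P j (\<phi> j k) = P j \<omega>0" if j: "j \<in> {1..r}" and k: "k \<in> K ` ?\<Omega>" for j k
  proof -
    obtain \<omega>1 where w1: "\<omega>1 \<in> ?\<Omega>" "k = K \<omega>1" using k by auto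
    have "In_edges (ex_edges r) (Ubar j) \<in> ex_wiretap r" using j unfolding ex_wiretap_def by auto
    hence "mutual_info ?\<Omega> K (P j) = 0" using mi unfolding P_def by blast
    from mi_zero_prod[OF fin this w1(1) w0] obtain \<omega> where "\<omega> \<in> ?\<Omega> \<and> K \<omega> = k \<and> P j \<omega> = P j \<omega>0"
      using w1 by auto
    thus ?thesis unfolding \<phi>_def by (rule someI[where P="\<lambda>\<omega>. \<omega> \<in> ?\<Omega> \<and> K \<omega> = k \<and> P j \<omega> = P j \<omega>0"])
  qed
  define J where "J = {2..r}"
  have J1: "J \<subseteq> {1..r}" "1 \<notin> J" unfolding J_def by auto
  define Om where "Om = (\<lambda>t v. case v of Src j \<Rightarrow> if j \<in> J then \<phi> j (t j) (Src j) else (\<lambda>_. False) | _ \<Rightarrow> (\<lambda>_. False))"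
  define T where "T = PiE J (\<lambda>_. K ` ?\<Omega>)"
  define F where "F = (\<lambda>t. X (Om t) (Ubar 1, Dst 1))"
  have r1: "(1::nat) \<in> {1..r}" using r by auto
  have OmS: "Om t \<in> ?\<Omega>" if t: "t \<in> T" for t
    unfolding sample_space_def
  proof (intro CollectI allI impI)
    fix v k assume a: "v \<notin> ex_sources r \<or> m \<le> k"
    show "Om t v k = False"
    proof (cases v)
      case (Src j)
      show ?thesis
      proof (cases "j \<in> J")
        case True
        have "t j \<in> K ` ?\<Omega>" using t True unfolding T_def by auto
        hence "\<phi> j (t j) \<in> ?\<Omega>" using phi J1 True by blast
        moreover have "m \<le> k" using a Src True J1 by (auto simp: Src_in)
        ultimately show ?thesis using Src True unfolding Om_def by (simp add: ss_out)
      qed (simp add: Om_def Src)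
    qed (simp_all add: Om_def)
  qed
  have inj: "inj_on F T"
  proof
    fix t s assume t: "t \<in> T" and s: "s \<in> T" and Fe: "F t = F s"
    show "t = s"
    proof
      fix j show "t j = s j"
      proof (cases "j \<in> J")
        case False
        have "t j = undefined" using PiE_arb[OF t[unfolded T_def] False] .
        moreover have "s j = undefined" using PiE_arb[OF s[unfolded T_def] False] .
        ultimately show ?thesis by simp
      next
        case True
        have jr: "j \<in> {1..r}" using True J1 by auto
        have tk: "t j \<in> K ` ?\<Omega>" "s j \<in> K ` ?\<Omega>" using t s True unfolding T_def by auto
        note pt = phi[OF jr tk(1)] and ps = phi[OF jr tk(2)]
        have ce1: "cond_ent ?\<Omega> (bits_rv M) (msgs X (In_edges (ex_edges r) (Dst 1))) = 0"
          using ce r1 unfolding ex_terminals_def by auto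
        have cej: "cond_ent ?\<Omega> (bits_rv M) (msgs X (In_edges (ex_edges r) (Dst j))) = 0"
          using ce jr unfolding ex_terminals_def by auto
        have "\<forall>u. (Src j, u) \<in> M \<longrightarrow> \<phi> j (t j) (Src j) u = \<phi> j (s j) (Src j) u"
        proof (intro allI impI)
          fix u assume "(Src j, u) \<in> M"
          moreover have "Src j \<noteq> Src 1" using J1 True by auto
          ultimately have "Om t (Src j) u = Om s (Src j) u"
            using claimA[OF code r1 ce1 OmS[OF t] OmS[OF s], of "Src j" u] Fe unfolding F_def by blast
          thus "\<phi> j (t j) (Src j) u = \<phi> j (s j) (Src j) u" unfolding Om_def using True by simp
        qed
        note bits = this
        have pt1: "\<phi> j (t j) \<in> ?\<Omega>" "K (\<phi> j (t j)) = t j" "P j (\<phi> j (t j)) = P j \<omega>0" using pt by blast+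
        have ps1: "\<phi> j (s j) \<in> ?\<Omega>" "K (\<phi> j (s j)) = s j" "P j (\<phi> j (s j)) = P j \<omega>0" using ps by blast+
        have "P j (\<phi> j (t j)) = P j (\<phi> j (s j))" using pt1(3) ps1(3) by (rule trans[OF _ sym])
        hence Pe: "msgs X (In_edges (ex_edges r) (Ubar j)) (\<phi> j (t j)) = msgs X (In_edges (ex_edges r) (Ubar j)) (\<phi> j (s j))"
          unfolding P_def .
        have "K (\<phi> j (t j)) = K (\<phi> j (s j))"
          by (rule claimB[OF code jr cej ceK pt1(1) ps1(1) Pe bits])
        thus ?thesis using pt1(2) ps1(2) by simp
      qed
    qed
  qed
  have img: "F ` T \<subseteq> {..<2 ^ n}"
    using code_bound[OF code E_mem(3)[OF r1] OmS] unfolding F_def by auto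
  have "card T \<le> card {..<(2::nat) ^ n}" by (rule card_inj_on_le[OF inj img]) simp
  moreover have "card T = card (K ` ?\<Omega>) ^ (r - 1)"
    unfolding T_def J_def by (simp add: card_PiE)
  ultimately show ?thesis by simp
qed

lemma count1:
  assumes r: "r \<ge> 2" and code: "is_code (ex_edges r) ex_cap (ex_sources r) n m X"
    and ce: "\<forall>d\<in>ex_terminals r. cond_ent (sample_space (ex_sources r) m) K (msgs X (In_edges (ex_edges r) d)) = 0"
    and mi: "\<forall>\<beta>\<in>ex_wiretap r. mutual_info (sample_space (ex_sources r) m) K (msgs X \<beta>) = 0"
  shows "card (K ` sample_space (ex_sources r) m) \<le> 2 ^ n"
proof -
  let ?\<Omega> = "sample_space (ex_sources r) m"
  have fin: "finite ?\<Omega>" by (rule ss_fin[OF fin_sources])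
  define \<omega>0 :: "node outcome" where "\<omega>0 = (\<lambda>_ _. False)"
  have w0: "\<omega>0 \<in> ?\<Omega>" unfolding \<omega>0_def by (rule ss_false)
  have r1: "(1::nat) \<in> {1..r}" using r by auto
  define P where "P = msgs X (In_edges (ex_edges r) (Unode 1))"
  define \<phi> where "\<phi> = (\<lambda>k. SOME \<omega>. \<omega> \<in> ?\<Omega> \<and> K \<omega> = k \<and> P \<omega> = P \<omega>0)"
  have phi: "\<phi> k \<in> ?\<Omega> \<and> K (\<phi> k) = k \<and> P (\<phi> k) = P \<omega>0" if k: "k \<in> K ` ?\<Omega>" for k
  proof -
    obtain \<omega>1 where w1: "\<omega>1 \<in> ?\<Omega>" "k = K \<omega>1" using k by auto
    have "In_edges (ex_edges r) (Unode 1) \<in> ex_wiretap r" using r1 unfolding ex_wiretap_def by auto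
    hence "mutual_info ?\<Omega> K P = 0" using mi unfolding P_def by blast
    from mi_zero_prod[OF fin this w1(1) w0] obtain \<omega> where "\<omega> \<in> ?\<Omega> \<and> K \<omega> = k \<and> P \<omega> = P \<omega>0"
      using w1 by auto
    thus ?thesis unfolding \<phi>_def by (rule someI[where P="\<lambda>\<omega>. \<omega> \<in> ?\<Omega> \<and> K \<omega> = k \<and> P \<omega> = P \<omega>0"])
  qed
  have ce1: "cond_ent ?\<Omega> K (msgs X (In_edges (ex_edges r) (Dst 1))) = 0"
    using ce r1 unfolding ex_terminals_def by auto
  define F where "F = (\<lambda>k. X (\<phi> k) (Ubar 1, Dst 1))"
  have inj: "inj_on F (K ` ?\<Omega>)"
  proof
    fix k k' assume k: "k \<in> K ` ?\<Omega>" and k': "k' \<in> K ` ?\<Omega>" and Fe: "F k = F k'"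
    note p = phi[OF k] and p' = phi[OF k']
    have "X (\<phi> k) (Src 1, Unode 1) = X (\<phi> k') (Src 1, Unode 1)"
      using p p' unfolding P_def msgs_eq In_Unode[OF r1] by simp
    hence "X (\<phi> k) (Unode 1, Dst 1) = X (\<phi> k') (Unode 1, Dst 1)"
      using L_unode[OF code r1] p p' by blast
    hence "msgs X (In_edges (ex_edges r) (Dst 1)) (\<phi> k) = msgs X (In_edges (ex_edges r) (Dst 1)) (\<phi> k')"
      unfolding msgs_eq In_Dst[OF r1] using Fe unfolding F_def by simp
    hence "K (\<phi> k) = K (\<phi> k')" using ce_zero_fun[OF fin ce1] p p' by blast
    thus "k = k'" using p p' by simp
  qed
  have img: "F ` (K ` ?\<Omega>) \<subseteq> {..<2 ^ n}"
    using code_bound[OF code E_mem(3)[OF r1]] phi unfolding F_def by auto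
  have "card (K ` ?\<Omega>) \<le> card {..<(2::nat) ^ n}" by (rule card_inj_on_le[OF inj img]) simp
  thus ?thesis by simp
qed




definition val :: "nat \<Rightarrow> (nat \<Rightarrow> bool) \<Rightarrow> nat" where
  "val n f = (\<Sum>k<n. if f k then 2 ^ k else 0)"

lemma val_Suc: "val (Suc n) f = val n f + (if f n then 2 ^ n else 0)"
  by (simp add: val_def)

lemma val_lt: "val n f < 2 ^ n"
  by (induction n) (auto simp: val_Suc val_def[of 0])

lemma val_cong: "(\<And>k. k < n \<Longrightarrow> f k = g k) \<Longrightarrow> val n f = val n g"
  unfolding val_def by (rule sum.cong) auto

lemma val_inj: "val n f = val n g \<Longrightarrow> k < n \<Longrightarrow> f k = g k"
proof (induction n)
  case 0 thus ?case by simp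
next
  case (Suc n)
  have l: "val n f < 2 ^ n" "val n g < 2 ^ n" by (rule val_lt)+
  have fn: "f n = g n"
  proof (rule ccontr)
    assume "f n \<noteq> g n"
    thus False using Suc.prems(1) l unfolding val_Suc by (cases "f n") auto
  qed
  hence "val n f = val n g" using Suc.prems(1) unfolding val_Suc by simp
  thus ?case using Suc fn by (cases "k = n") auto
qed

lemma val_surj: "x < 2 ^ n \<Longrightarrow> \<exists>f. val n f = x"
proof (induction n arbitrary: x)
  case 0 thus ?case by (simp add: val_def)
next
  case (Suc n)
  show ?case
  proof (cases "x < 2 ^ n")
    case True
    then obtain f where "val n f = x" using Suc.IH by blast
    hence "val (Suc n) (f(n := False)) = x"
      unfolding val_Suc by (simp, metis fun_upd_other less_irrefl val_cong)
    thus ?thesis by blast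
  next
    case False
    hence "x - 2 ^ n < 2 ^ n" using Suc.prems by simp
    then obtain f where f: "val n f = x - 2 ^ n" using Suc.IH by blast
    have "val n (f(n := True)) = val n f" by (rule val_cong) simp
    hence "val (Suc n) (f(n := True)) = x" using f False unfolding val_Suc by simp
    thus ?thesis by blast
  qed
qed

definition par :: "nat set \<Rightarrow> node outcome \<Rightarrow> nat \<Rightarrow> bool" where
  "par A \<omega> k = odd (card {i\<in>A. \<omega> (Src i) k})"

lemma par_split:
  assumes "finite A" "i \<in> A"
  shows "par A \<omega> k = (par (A - {i}) \<omega> k \<noteq> \<omega> (Src i) k)"
proof (cases "\<omega> (Src i) k")
  case True
  hence "{j\<in>A. \<omega> (Src j) k} = insert i {j\<in>A - {i}. \<omega> (Src j) k}" using assms by auto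
  moreover have "card (insert i {j\<in>A - {i}. \<omega> (Src j) k}) = Suc (card {j\<in>A - {i}. \<omega> (Src j) k})"
    using assms by (intro card_insert_disjoint) auto
  ultimately show ?thesis using True unfolding par_def by simp
next
  case False
  hence "{j\<in>A. \<omega> (Src j) k} = {j\<in>A - {i}. \<omega> (Src j) k}" using assms by auto
  thus ?thesis using False unfolding par_def by simp
qed

lemma par_cong: "(\<And>i. i \<in> A \<Longrightarrow> \<omega> (Src i) k = \<omega>' (Src i) k) \<Longrightarrow> par A \<omega> k = par A \<omega>' k"
  unfolding par_def by (metis (mono_tags, lifting) Collect_cong)

definition Xc :: "nat \<Rightarrow> nat \<Rightarrow> node outcome \<Rightarrow> node \<times> node \<Rightarrow> nat" where
  "Xc r n \<omega> e = (case fst e of Src j \<Rightarrow> val n (\<omega> (Src j)) | Unode i \<Rightarrow> val n (\<omega> (Src i))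
      | Ubar i \<Rightarrow> val n (par ({1..r} - {i}) \<omega>) | Dst _ \<Rightarrow> 0)"

definition Kc :: "nat \<Rightarrow> nat \<Rightarrow> node outcome \<Rightarrow> nat" where
  "Kc r n \<omega> = val n (par {1..r} \<omega>)"

lemma Xc_lt: "Xc r n \<omega> e < 2 ^ n"
  unfolding Xc_def by (auto split: node.split simp: val_lt)

lemma is_code_Xc: "is_code (ex_edges r) ex_cap (ex_sources r) n n (Xc r n)"
  unfolding is_code_def
proof (intro conjI ballI impI)
  fix \<omega> e show "Xc r n \<omega> e < nat \<lfloor>2 powr (ex_cap e * real n)\<rfloor>" unfolding cap_bound by (rule Xc_lt)
next
  fix e \<omega> \<omega>' assume e: "e \<in> ex_edges r"
    and H: "(\<forall>e'\<in>In_edges (ex_edges r) (fst e). Xc r n \<omega> e' = Xc r n \<omega>' e') \<and> \<omega> (fst e) = \<omega>' (fst e)"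
  from e consider (a) i where "e = (Src i, Unode i)" "i \<in> {1..r}"
    | (b) i j where "e = (Src j, Ubar i)" "i \<in> {1..r}" "j \<in> {1..r}" "i \<noteq> j"
    | (c) i where "e = (Unode i, Dst i)" "i \<in> {1..r}"
    | (d) i where "e = (Ubar i, Dst i)" "i \<in> {1..r}"
    unfolding ex_edges_def by blast
  thus "Xc r n \<omega> e = Xc r n \<omega>' e"
  proof cases
    case a thus ?thesis using H by (simp add: Xc_def)
  next
    case b thus ?thesis using H by (simp add: Xc_def)
  next
    case (c i)
    have "Xc r n \<omega> (Src i, Unode i) = Xc r n \<omega>' (Src i, Unode i)"
      using H c by (simp add: In_Unode)
    thus ?thesis using c by (simp add: Xc_def)
  next
    case (d i)
    have "\<forall>j\<in>{1..r} - {i}. Xc r n \<omega> (Src j, Ubar i) = Xc r n \<omega>' (Src j, Ubar i)"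
      using H d by (simp add: In_Ubar)
    hence vv: "\<forall>j\<in>{1..r} - {i}. val n (\<omega> (Src j)) = val n (\<omega>' (Src j))"
      by (simp add: Xc_def)
    have "\<forall>j\<in>{1..r} - {i}. \<forall>k<n. \<omega> (Src j) k = \<omega>' (Src j) k"
    proof (intro ballI allI impI)
      fix j k assume "j \<in> {1..r} - {i}" "k < n"
      thus "\<omega> (Src j) k = \<omega>' (Src j) k" using vv val_inj by blast
    qed
    hence "val n (par ({1..r} - {i}) \<omega>) = val n (par ({1..r} - {i}) \<omega>')"
      by (intro val_cong par_cong) auto
    thus ?thesis using d by (simp add: Xc_def)
  qed
qed

lemma Kc_tau:
  assumes j0: "j0 \<in> {1..r}"
  and Kw: "Kc r n \<omega> = Kc r n \<omega>0"
  shows "Kc r n (\<omega>(Src j0 := (\<lambda>k. \<omega> (Src j0) k \<noteq> (k < n \<and> par {1..r} \<omega>0 k \<noteq> par {1..r} \<omega>1 k)))) = Kc r n \<omega>1"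
proof -
  define D where "D = (\<lambda>k. k < n \<and> par {1..r} \<omega>0 k \<noteq> par {1..r} \<omega>1 k)"
  define \<omega>' where "\<omega>' = \<omega>(Src j0 := (\<lambda>k. \<omega> (Src j0) k \<noteq> D k))"
  have fin: "finite {1..r}" by simp
  have "par {1..r} \<omega>' k = par {1..r} \<omega>1 k" if k: "k < n" for k
  proof -
    have p0: "par {1..r} \<omega> k = par {1..r} \<omega>0 k" using val_inj[OF Kw[unfolded Kc_def] k] .
    have "par ({1..r} - {j0}) \<omega>' k = par ({1..r} - {j0}) \<omega> k"
      by (rule par_cong) (simp add: \<omega>'_def)
    hence "par {1..r} \<omega>' k = (par ({1..r} - {j0}) \<omega> k \<noteq> (\<omega> (Src j0) k \<noteq> D k))"
      using par_split[OF fin j0, of \<omega>' k] by (simp add: \<omega>'_def)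
    also have "\<dots> = (par {1..r} \<omega> k \<noteq> D k)" using par_split[OF fin j0, of \<omega> k] by blast
    finally show ?thesis using p0 k unfolding D_def by blast
  qed
  hence "Kc r n \<omega>' = Kc r n \<omega>1" unfolding Kc_def by (rule val_cong)
  thus ?thesis unfolding \<omega>'_def D_def .
qed

lemma ach_secret:
  assumes j0: "j0 \<in> {1..r}" and B: "\<forall>e\<in>\<beta>. \<exists>j'. fst e = Src j' \<and> j' \<noteq> j0"
  shows "mutual_info (sample_space (ex_sources r) n) (Kc r n) (msgs (Xc r n) \<beta>) = 0"
    "uniform_rv (sample_space (ex_sources r) n) (Kc r n)"
proof -
  let ?\<Omega> = "sample_space (ex_sources r) n"
  have fin: "finite ?\<Omega>" by (rule ss_fin[OF fin_sources])
  have H: "\<exists>\<tau>. inj_on \<tau> ?\<Omega> \<and> \<tau> ` ?\<Omega> \<subseteq> ?\<Omega> \<and> (\<forall>\<omega>\<in>?\<Omega>. msgs (Xc r n) \<beta> (\<tau> \<omega>) = msgs (Xc r n) \<beta> \<omega>)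
      \<and> (\<forall>\<omega>\<in>?\<Omega>. Kc r n \<omega> = Kc r n \<omega>0 \<longrightarrow> Kc r n (\<tau> \<omega>) = Kc r n \<omega>1)"
    if "\<omega>0 \<in> ?\<Omega>" "\<omega>1 \<in> ?\<Omega>" for \<omega>0 \<omega>1
  proof -
    define D where "D = (\<lambda>k. k < n \<and> par {1..r} \<omega>0 k \<noteq> par {1..r} \<omega>1 k)"
    define \<tau> where "\<tau> = (\<lambda>\<omega>::node outcome. \<omega>(Src j0 := (\<lambda>k. \<omega> (Src j0) k \<noteq> D k)))"
    have tt: "\<tau> (\<tau> \<omega>) = \<omega>" for \<omega> unfolding \<tau>_def by (auto simp: fun_eq_iff)
    have "inj_on \<tau> ?\<Omega>" by (rule inj_on_inverseI[where g=\<tau>]) (rule tt)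
    moreover have "\<tau> ` ?\<Omega> \<subseteq> ?\<Omega>"
    proof
      fix x assume "x \<in> \<tau> ` ?\<Omega>"
      then obtain \<omega> where w: "\<omega> \<in> ?\<Omega>" "x = \<tau> \<omega>" by blast
      have sj: "Src j0 \<in> ex_sources r" using j0 by (simp add: Src_in)
      show "x \<in> ?\<Omega>" unfolding sample_space_def
      proof (intro CollectI allI impI)
        fix v k assume a: "v \<notin> ex_sources r \<or> n \<le> k"
        show "x v k = False"
        proof (cases "v = Src j0")
          case True
          hence "n \<le> k" using a sj by blast
          thus ?thesis using w True ss_out(2)[OF w(1)] unfolding \<tau>_def D_def by simp
        next
          case False
          thus ?thesis using w a ss_out[OF w(1)] unfolding \<tau>_def by auto
        qed
      qed
    qed
    moreover have "\<forall>\<omega>\<in>?\<Omega>. msgs (Xc r n) \<beta> (\<tau> \<omega>) = msgs (Xc r n) \<beta> \<omega>"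
    proof (intro ballI)
      fix \<omega> assume "\<omega> \<in> ?\<Omega>"
      show "msgs (Xc r n) \<beta> (\<tau> \<omega>) = msgs (Xc r n) \<beta> \<omega>" unfolding msgs_eq
      proof
        fix e assume "e \<in> \<beta>"
        then obtain j' where "fst e = Src j'" "j' \<noteq> j0" using B by blast
        thus "Xc r n (\<tau> \<omega>) e = Xc r n \<omega> e" unfolding Xc_def \<tau>_def by simp
      qed
    qed
    moreover have "\<forall>\<omega>\<in>?\<Omega>. Kc r n \<omega> = Kc r n \<omega>0 \<longrightarrow> Kc r n (\<tau> \<omega>) = Kc r n \<omega>1"
      unfolding \<tau>_def D_def using Kc_tau[OF j0] by blast
    ultimately show ?thesis by blast
  qed
  note TI = transl_indep[OF fin H]
  show "uniform_rv ?\<Omega> (Kc r n)" by (rule TI(2))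
  show "mutual_info ?\<Omega> (Kc r n) (msgs (Xc r n) \<beta>) = 0"
    by (rule indep_mi[OF fin]) (use TI(1) in blast)
qed

lemma ach_decode:
  assumes i: "i \<in> {1..r}"
  shows "cond_ent (sample_space (ex_sources r) n) (Kc r n) (msgs (Xc r n) (In_edges (ex_edges r) (Dst i))) = 0"
proof (rule fun_ce_zero[OF ss_fin[OF fin_sources]])
  fix \<omega> \<omega>' assume "msgs (Xc r n) (In_edges (ex_edges r) (Dst i)) \<omega> = msgs (Xc r n) (In_edges (ex_edges r) (Dst i)) \<omega>'"
  hence a: "val n (\<omega> (Src i)) = val n (\<omega>' (Src i))" and b: "val n (par ({1..r} - {i}) \<omega>) = val n (par ({1..r} - {i}) \<omega>')"
    unfolding msgs_eq In_Dst[OF i] by (simp_all add: Xc_def)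
  have fin: "finite {1..r}" by simp
  show "Kc r n \<omega> = Kc r n \<omega>'" unfolding Kc_def
  proof (rule val_cong)
    fix k assume k: "k < n"
    show "par {1..r} \<omega> k = par {1..r} \<omega>' k"
      using par_split[OF fin i, of \<omega> k] par_split[OF fin i, of \<omega>' k] val_inj[OF a k] val_inj[OF b k] by simp
  qed
qed

lemma ach_img:
  assumes r: "r \<ge> 1"
  shows "Kc r n ` sample_space (ex_sources r) n = {..<2 ^ n}"
proof
  show "Kc r n ` sample_space (ex_sources r) n \<subseteq> {..<2 ^ n}" unfolding Kc_def using val_lt by auto
  show "{..<2 ^ n} \<subseteq> Kc r n ` sample_space (ex_sources r) n"
  proof
    fix x assume "x \<in> {..<(2::nat) ^ n}"
    then obtain f where f: "val n f = x" using val_surj by auto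
    define \<omega> :: "node outcome" where "\<omega> = (\<lambda>v k. v = Src 1 \<and> k < n \<and> f k)"
    have w: "\<omega> \<in> sample_space (ex_sources r) n"
      unfolding sample_space_def \<omega>_def using r by (auto simp: Src_in)
    have "par {1..r} \<omega> k = f k" if "k < n" for k
    proof -
      have "{i\<in>{1..r}. \<omega> (Src i) k} = (if f k then {1} else {})" using r that unfolding \<omega>_def by auto
      thus ?thesis unfolding par_def by simp
    qed
    hence "Kc r n \<omega> = x" unfolding Kc_def using f val_cong by metis
    thus "x \<in> Kc r n ` sample_space (ex_sources r) n" using w by blast
  qed
qed

lemma ach_feasible:
  assumes r: "r \<ge> 2" and D: "\<Delta> > 0"
  shows "key_feasible (ex_edges r) ex_cap (ex_sources r) (ex_terminals r) (ex_wiretap r) (1 - \<Delta>) n"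
  unfolding key_feasible_def
proof (intro exI conjI ballI)
  let ?\<Omega> = "sample_space (ex_sources r) n"
  show "is_code (ex_edges r) ex_cap (ex_sources r) n n (Xc r n)" by (rule is_code_Xc)
  have r1: "(1::nat) \<in> {1..r}" using r by auto
  show u: "uniform_rv ?\<Omega> (Kc r n)" using ach_secret(2)[OF r1, of "{}"] by simp
  have "ent ?\<Omega> (Kc r n) = log 2 (real (card (Kc r n ` ?\<Omega>)))"
    by (rule uniform_ent[OF ss_fin[OF fin_sources] _ u]) (use ss_false in blast)
  also have "\<dots> = real n" using ach_img[of r n] r by simp
  finally have e: "ent ?\<Omega> (Kc r n) = real n" .
  have "0 \<le> \<Delta> * real n" using D by simp
  moreover have "(1 - \<Delta>) * real n = real n - \<Delta> * real n" by (simp add: left_diff_distrib)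
  ultimately show "(1 - \<Delta>) * real n \<le> ent ?\<Omega> (Kc r n)" using e by linarith
  show "cond_ent ?\<Omega> (Kc r n) (msgs (Xc r n) (In_edges (ex_edges r) d)) = 0" if "d \<in> ex_terminals r" for d
    using that ach_decode unfolding ex_terminals_def by blast
  fix \<beta> assume "\<beta> \<in> ex_wiretap r"
  then obtain i where i: "i \<in> {1..r}" and disj: "\<beta> = In_edges (ex_edges r) (Unode i) \<or> \<beta> = In_edges (ex_edges r) (Ubar i)"
    unfolding ex_wiretap_def by blast
  from disj show "mutual_info ?\<Omega> (Kc r n) (msgs (Xc r n) \<beta>) = 0"
  proof
    assume b: "\<beta> = In_edges (ex_edges r) (Unode i)"
    define j0 where "j0 = (if i = 1 then 2 else 1::nat)"
    have j0: "j0 \<in> {1..r}" "j0 \<noteq> i" using r i unfolding j0_def by auto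
    show ?thesis
      by (rule ach_secret(1)[OF j0(1)]) (use b j0 i in \<open>simp add: In_Unode\<close>)
  next
    assume b: "\<beta> = In_edges (ex_edges r) (Ubar i)"
    show ?thesis
      by (rule ach_secret(1)[OF i]) (use b i in \<open>auto simp: In_Ubar\<close>)
  qed
qed




lemma inf_pos:
  assumes "infinite (A :: nat set)" shows "\<exists>n\<in>A. n > 0"
proof (rule ccontr)
  assume "\<not> ?thesis"
  hence "A \<subseteq> {0}" by auto
  hence "finite A" by (rule finite_subset) simp
  thus False using assms by simp
qed

lemma ss_ne: "sample_space S m \<noteq> {}" using ss_false by blast

theorem mainTheorem5:
  fixes r :: nat
  assumes "r \<ge> 2"
  shows "key_rate_achievable (ex_edges r) ex_cap (ex_sources r) (ex_terminals r) (ex_wiretap r) 1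
       \<and> (\<forall>R. key_rate_achievable (ex_edges r) ex_cap (ex_sources r) (ex_terminals r) (ex_wiretap r) R
               \<longrightarrow> R \<le> 1)
       \<and> (\<forall>R. key2_rate_achievable (ex_edges r) ex_cap (ex_sources r) (ex_terminals r) (ex_wiretap r) R
               \<longrightarrow> R \<le> 1 / (real r - 1))"
proof (intro conjI allI impI)
  show "key_rate_achievable (ex_edges r) ex_cap (ex_sources r) (ex_terminals r) (ex_wiretap r) 1"
    unfolding key_rate_achievable_def
  proof (intro allI impI)
    fix \<Delta> :: real assume D: "\<Delta> > 0"
    have "{n. key_feasible (ex_edges r) ex_cap (ex_sources r) (ex_terminals r) (ex_wiretap r) (1 - \<Delta>) n} = UNIV"
      using ach_feasible[OF assms D] by blast
    thus "infinite {n. key_feasible (ex_edges r) ex_cap (ex_sources r) (ex_terminals r) (ex_wiretap r) (1 - \<Delta>) n}"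
      by simp
  qed
next
  fix R assume A: "key_rate_achievable (ex_edges r) ex_cap (ex_sources r) (ex_terminals r) (ex_wiretap r) R"
  show "R \<le> 1"
  proof (rule ccontr)
    assume "\<not> R \<le> 1"
    define \<Delta> where "\<Delta> = (R - 1) / 2"
    have D: "\<Delta> > 0" using \<open>\<not> R \<le> 1\<close> unfolding \<Delta>_def by simp
    obtain n where n: "n > 0" "key_feasible (ex_edges r) ex_cap (ex_sources r) (ex_terminals r) (ex_wiretap r) (R - \<Delta>) n"
      using inf_pos A D unfolding key_rate_achievable_def by blast
    then obtain m X and K :: "node outcome \<Rightarrow> nat" where c: "is_code (ex_edges r) ex_cap (ex_sources r) n m X"
      and u: "uniform_rv (sample_space (ex_sources r) m) K"
      and e: "ent (sample_space (ex_sources r) m) K \<ge> (R - \<Delta>) * real n"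
      and ce: "\<forall>d\<in>ex_terminals r. cond_ent (sample_space (ex_sources r) m) K (msgs X (In_edges (ex_edges r) d)) = 0"
      and mi: "\<forall>\<beta>\<in>ex_wiretap r. mutual_info (sample_space (ex_sources r) m) K (msgs X \<beta>) = 0"
      unfolding key_feasible_def by blast
    let ?\<Omega> = "sample_space (ex_sources r) m"
    have Nle: "card (K ` ?\<Omega>) \<le> 2 ^ n" by (rule count1[OF assms c ce mi])
    have Npos: "card (K ` ?\<Omega>) > 0" using ss_fin[OF fin_sources] ss_ne by (simp add: card_gt_0_iff)
    have "ent ?\<Omega> K = log 2 (real (card (K ` ?\<Omega>)))"
      by (rule uniform_ent[OF ss_fin[OF fin_sources] ss_ne u])
    also have "\<dots> \<le> log 2 (2 ^ n)"
      using Nle Npos by (subst log_le_cancel_iff) (auto simp del: log_pow_cancel)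
    also have "\<dots> = real n" by simp
    finally have "(R - \<Delta>) * real n \<le> real n" using e by linarith
    hence "R - \<Delta> \<le> 1" using n(1) by (simp add: mult_le_cancel_right1)
    thus False using \<open>\<not> R \<le> 1\<close> unfolding \<Delta>_def by (simp add: field_simps)
  qed
next
  fix R assume A: "key2_rate_achievable (ex_edges r) ex_cap (ex_sources r) (ex_terminals r) (ex_wiretap r) R"
  have r1: "real r - 1 > 0" using assms by simp
  show "R \<le> 1 / (real r - 1)"
  proof (rule ccontr)
    assume nle: "\<not> R \<le> 1 / (real r - 1)"
    define \<Delta> where "\<Delta> = (R - 1 / (real r - 1)) / 2"
    have D: "\<Delta> > 0" using nle unfolding \<Delta>_def by simp
    obtain n where n: "n > 0" "key2_feasible (ex_edges r) ex_cap (ex_sources r) (ex_terminals r) (ex_wiretap r) (R - \<Delta>) n"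
      using inf_pos A D unfolding key2_rate_achievable_def by blast
    then obtain m X and K :: "node outcome \<Rightarrow> nat" and M where c: "is_code (ex_edges r) ex_cap (ex_sources r) n m X"
      and u: "uniform_rv (sample_space (ex_sources r) m) K"
      and e: "ent (sample_space (ex_sources r) m) K \<ge> (R - \<Delta>) * real n"
      and ce: "\<forall>d\<in>ex_terminals r. cond_ent (sample_space (ex_sources r) m) (bits_rv M) (msgs X (In_edges (ex_edges r) d)) = 0"
      and ceK: "cond_ent (sample_space (ex_sources r) m) K (bits_rv M) = 0"
      and mi: "\<forall>\<beta>\<in>ex_wiretap r. mutual_info (sample_space (ex_sources r) m) K (msgs X \<beta>) = 0"
      unfolding key2_feasible_def by blast
    let ?\<Omega> = "sample_space (ex_sources r) m"
    define N where "N = card (K ` ?\<Omega>)"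
    have Nle: "N ^ (r - 1) \<le> 2 ^ n" unfolding N_def by (rule count2[OF assms c ce ceK mi])
    have Npos: "N > 0" unfolding N_def using ss_fin[OF fin_sources] ss_ne by (simp add: card_gt_0_iff)
    have eN: "ent ?\<Omega> K = log 2 (real N)"
      unfolding N_def by (rule uniform_ent[OF ss_fin[OF fin_sources] ss_ne u])
    have "real (r - 1) * log 2 (real N) = log 2 (real N ^ (r - 1))"
      by (simp add: log_nat_power)
    also have "\<dots> \<le> log 2 (2 ^ n)"
    proof -
      have "real N ^ (r - 1) \<le> 2 ^ n" using Nle by (metis of_nat_le_iff of_nat_numeral of_nat_power)
      moreover have "real N ^ (r - 1) > 0" using Npos by simp
      ultimately show ?thesis by (subst log_le_cancel_iff) (auto simp del: log_pow_cancel)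
    qed
    also have "\<dots> = real n" by simp
    finally have L: "(real r - 1) * log 2 (real N) \<le> real n" using assms by (simp add: of_nat_diff)
    have "(R - \<Delta>) * real n \<le> log 2 (real N)" using e eN by simp
    hence "(real r - 1) * ((R - \<Delta>) * real n) \<le> (real r - 1) * log 2 (real N)"
      using r1 by (simp add: mult_left_mono)
    hence "((real r - 1) * (R - \<Delta>)) * real n \<le> 1 * real n" using L by (simp add: mult.assoc)
    hence "(real r - 1) * (R - \<Delta>) \<le> 1" using n(1) by (simp only: mult_le_cancel_right)
    hence "R - \<Delta> \<le> 1 / (real r - 1)" using r1 by (simp add: field_simps)
    thus False using nle unfolding \<Delta>_def by (simp add: field_simps)
  qed
qed


end
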